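(* Let $G=\mathrm{SL}_2(q)$ with $q$ even, and let $\mathcal{C}$ be the conjugacy class of an involution. Then $\mathcal{K}(G,\mathcal{C})$ equals the commuting graph on $\mathcal{C}$, and $K_{\mathcal{C}}$ is reducible and non-degenerate.
   Context: For a finite group $G$ and a subset $\mathcal{C}\subseteq G\setminus\{1\}$ closed under conjugation, the Killing form $K_{\mathcal{C}}$ is the bilinear form on the complex vector space with basis $\mathcal{C}$ given on basis elements by $K_{\mathcal{C}}(a,b)=|C_G(ab)\cap\mathcal{C}|$; it is non-degenerate if the matrix $(K_{\mathcal{C}}(a,b))_{a,b\in\mathcal{C}}$ is invertible. $\mathcal{K}(G,\mathcal{C})$ is the graph with vertex set $\mathcal{C}$ in which distinct $a,b$ are adjacent iff $C_G(ab)\cap\mathcal{C}\neq\emptyset$. $K_{\mathcal{C}}$ is irreducible if $\mathcal{K}(G,\mathcal{C})$ is connected and reducible otherwise. The commuting graph on $\mathcal{C}$ has vertex set $\mathcal{C}$, with distinct $a,b$ adjacent iff $ab=ba$. *)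

theory Defs
  imports "HOL-Analysis.Analysis" "HOL-Algebra.Group"
begin

definition SL2 :: "('a::field ^ 2 ^ 2) monoid" where
  "SL2 = \<lparr>carrier = {A. det A = 1}, monoid.mult = (**), one = mat 1\<rparr>"

definition centralizer_in :: "('g, 'b) monoid_scheme \<Rightarrow> 'g \<Rightarrow> 'g set" where
  "centralizer_in G x = {g \<in> carrier G. g \<otimes>\<^bsub>G\<^esub> x = x \<otimes>\<^bsub>G\<^esub> g}"

definition conj_class :: "('g, 'b) monoid_scheme \<Rightarrow> 'g \<Rightarrow> 'g set" where
  "conj_class G x = {g \<otimes>\<^bsub>G\<^esub> x \<otimes>\<^bsub>G\<^esub> inv\<^bsub>G\<^esub> g | g. g \<in> carrier G}"

definition killing_form :: "('g, 'b) monoid_scheme \<Rightarrow> 'g set \<Rightarrow> 'g \<Rightarrow> 'g \<Rightarrow> nat" where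
  "killing_form G C a b = card (centralizer_in G (a \<otimes>\<^bsub>G\<^esub> b) \<inter> C)"

definition killing_nondegenerate :: "('g, 'b) monoid_scheme \<Rightarrow> 'g set \<Rightarrow> bool" where
  "killing_nondegenerate G C \<longleftrightarrow>
     (\<exists>N :: 'g \<Rightarrow> 'g \<Rightarrow> complex. \<forall>a\<in>C. \<forall>c\<in>C.
        (\<Sum>b\<in>C. of_nat (killing_form G C a b) * N b c) = (if a = c then 1 else 0) \<and>
        (\<Sum>b\<in>C. N a b * of_nat (killing_form G C b c)) = (if a = c then 1 else 0))"

definition killing_adj :: "('g, 'b) monoid_scheme \<Rightarrow> 'g set \<Rightarrow> 'g \<Rightarrow> 'g \<Rightarrow> bool" where
  "killing_adj G C a b \<longleftrightarrow> a \<noteq> b \<and> centralizer_in G (a \<otimes>\<^bsub>G\<^esub> b) \<inter> C \<noteq> {}"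

definition commuting_adj :: "('g, 'b) monoid_scheme \<Rightarrow> 'g \<Rightarrow> 'g \<Rightarrow> bool" where
  "commuting_adj G a b \<longleftrightarrow> a \<noteq> b \<and> a \<otimes>\<^bsub>G\<^esub> b = b \<otimes>\<^bsub>G\<^esub> a"

definition graph_connected :: "'g set \<Rightarrow> ('g \<Rightarrow> 'g \<Rightarrow> bool) \<Rightarrow> bool" where
  "graph_connected V E \<longleftrightarrow>
     (\<forall>a\<in>V. \<forall>b\<in>V. (\<lambda>x y. x \<in> V \<and> y \<in> V \<and> E x y)\<^sup>*\<^sup>* a b)"

definition killing_irreducible :: "('g, 'b) monoid_scheme \<Rightarrow> 'g set \<Rightarrow> bool" where
  "killing_irreducible G C \<longleftrightarrow> graph_connected C (killing_adj G C)"

end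

theory Submission
  imports Defs
begin

lemma SL2_group: "group (SL2 :: ('a::field^2^2) monoid)"
proof (rule groupI)
  fix A :: "'a^2^2" assume "A \<in> carrier SL2"
  then have d: "det A = 1" by (simp add: SL2_def)
  then have "invertible A" by (simp add: invertible_det_nz)
  then obtain B where B: "A ** B = mat 1" "B ** A = mat 1" unfolding invertible_def by blast
  have "det B * det A = 1" using B(2) by (metis det_I det_mul)
  then have "det B = 1" using d by simp
  then show "\<exists>y\<in>carrier SL2. y \<otimes>\<^bsub>SL2\<^esub> A = \<one>\<^bsub>SL2\<^esub>" using B by (auto simp: SL2_def)
qed (auto simp: SL2_def det_mul matrix_mul_assoc)

lemma mm2: "((A::'a::comm_ring_1^2^2) ** B)$i$j = A$i$1*B$1$j + A$i$2*B$2$j"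
  by (simp add: matrix_matrix_mult_def sum_2)

lemma mat1_2: "(mat 1 :: 'a::comm_ring_1^2^2)$i$j = (if i = j then 1 else 0)"
  by (simp add: mat_def)

lemma eq2: "(A::'a^2^2) = B \<longleftrightarrow> A$1$1 = B$1$1 \<and> A$1$2 = B$1$2 \<and> A$2$1 = B$2$1 \<and> A$2$2 = B$2$2"
  by (auto simp: vec_eq_iff forall_2)

lemma one_neq_two2: "(1::2) \<noteq> 2" by simp

lemma ch2_neg: "CHAR('a::ring_1) = 2 \<Longrightarrow> -(u::'a) = u" by (rule uminus_CHAR_2)
lemma ch2_minus: "CHAR('a::ring_1) = 2 \<Longrightarrow> (u::'a) - v = u + v" by (rule minus_CHAR_2)
lemma ch2_double: "CHAR('a::ring_1) = 2 \<Longrightarrow> (u::'a) + u = 0"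
  by (metis ch2_neg add.right_inverse)

lemma ch2_two: "CHAR('a::ring_1) = 2 \<Longrightarrow> (2::'a) = 0"
  by (metis of_nat_CHAR of_nat_numeral)

lemma sq1_char2: assumes "CHAR('a::field) = 2" "(a::'a) * a = 1" shows "a = 1"
proof -
  have "(a + 1) * (a + 1) = a*a + (a + a) + 1" by (simp add: algebra_simps)
  also have "\<dots> = 0" using assms ch2_two[OF assms(1)] by (simp add: ch2_double[OF assms(1)])
  finally have "a + 1 = 0" by simp
  then have "a = - 1" by (simp add: eq_neg_iff_add_eq_0)
  then show ?thesis using ch2_neg[OF assms(1)] by metis
qed

lemma inv_props:
  fixes z :: "'a::field^2^2"
  assumes ch: "CHAR('a) = 2" and d: "det z = 1" and s: "z ** z = mat 1" and n: "z \<noteq> mat 1"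
  shows "z$2$2 = z$1$1 \<and> (z$1$2 \<noteq> 0 \<or> z$2$1 \<noteq> 0)"
proof -
  have e: "z$1$1*z$1$1 + z$1$2*z$2$1 = 1" "z$1$1*z$1$2 + z$1$2*z$2$2 = 0"
     "z$2$1*z$1$1 + z$2$2*z$2$1 = 0" "z$2$1*z$1$2 + z$2$2*z$2$2 = 1"
    using s unfolding eq2 by (simp_all add: mm2 mat1_2)
  have dd: "z$1$1 * z$2$2 - z$1$2 * z$2$1 = 1" using d by (simp add: det_2)
  show ?thesis
  proof (cases "z$1$2 = 0 \<and> z$2$1 = 0")
    case True
    then have "z$1$1 * z$1$1 = 1" "z$2$2 * z$2$2 = 1" using e by auto
    then have "z$1$1 = 1" "z$2$2 = 1" using sq1_char2[OF ch] by blast+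
    then have "z = mat 1" using True unfolding eq2 by (simp add: mat1_2)
    then show ?thesis using n by simp
  next
    case False
    have "z$1$2 * (z$1$1 + z$2$2) = 0" "z$2$1 * (z$1$1 + z$2$2) = 0" using e by (simp_all add: algebra_simps)
    then have "z$1$1 + z$2$2 = 0" using False by auto
    then have "z$2$2 = - z$1$1" by (simp add: eq_neg_iff_add_eq_0 add.commute)
    then show ?thesis using False ch2_neg[OF ch] by metis
  qed
qed

lemma comm_cond:
  fixes z M :: "'a::field^2^2"
  assumes ch: "CHAR('a) = 2" and d: "det z = 1" and s: "z ** z = mat 1" and n: "z \<noteq> mat 1"
    and c: "M ** z = z ** M"
  shows "M$2$2 = M$1$1 \<and> z$1$2 * M$2$1 = z$2$1 * M$1$2"
proof -
  obtain a b c' where zz: "z$1$1 = a" "z$2$2 = a" "z$1$2 = b" "z$2$1 = c'" and bc: "b \<noteq> 0 \<or> c' \<noteq> 0"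
    using inv_props[OF ch d s n] by metis
  have e: "M$1$1*a + M$1$2*c' = a*M$1$1 + b*M$2$1" "M$1$1*b + M$1$2*a = a*M$1$2 + b*M$2$2"
     "M$2$1*a + M$2$2*c' = c'*M$1$1 + a*M$2$1" "M$2$1*b + M$2$2*a = c'*M$1$2 + a*M$2$2"
    using c unfolding eq2 by (simp_all add: mm2 zz)
  have "b * (M$1$1 - M$2$2) = 0" using e(2) by (simp add: algebra_simps)
  moreover have "c' * (M$1$1 - M$2$2) = (c' * M$1$1 + a*M$2$1) - (M$2$1*a + M$2$2*c')" by (simp add: algebra_simps)
  moreover have "(c' * M$1$1 + a*M$2$1) - (M$2$1*a + M$2$2*c') = 0" using e(3) by (metis diff_self)
  ultimately have "b * (M$1$1 - M$2$2) = 0" "c' * (M$1$1 - M$2$2) = 0" by simp_all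
  then have "M$1$1 - M$2$2 = 0" using bc by (metis mult_eq_0_iff)
  moreover have "b * M$2$1 = c' * M$1$2" using e by (simp add: algebra_simps)
  ultimately show ?thesis using zz by simp
qed

lemma comm_sq:
  fixes z M :: "'a::field^2^2"
  assumes ch: "CHAR('a) = 2" and d: "det z = 1" and s: "z ** z = mat 1" and n: "z \<noteq> mat 1"
    and c: "M ** z = z ** M" and dM: "det M = 1"
  shows "M ** M = mat 1"
proof -
  have m: "M$2$2 = M$1$1" using comm_cond[OF assms(1-5)] by simp
  have dd: "M$1$1 * M$1$1 - M$1$2 * M$2$1 = 1" using dM m by (simp add: det_2)
  have t: "M$1$1 * M$1$2 + M$1$2 * M$1$1 = 0" "M$2$1 * M$1$1 + M$1$1 * M$2$1 = 0"
    by (metis ch2_double[OF ch] mult.commute)+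
  show ?thesis unfolding eq2 using dd t m
    by (simp add: mm2 mat1_2 ch2_minus[OF ch] mult.commute add.commute)
qed

lemma comm_trans:
  fixes z M M' :: "'a::field^2^2"
  assumes ch: "CHAR('a) = 2" and d: "det z = 1" and s: "z ** z = mat 1" and n: "z \<noteq> mat 1"
    and c: "M ** z = z ** M" and c': "M' ** z = z ** M'"
  shows "M ** M' = M' ** M"
proof -
  obtain a b c' where zz: "z$1$1 = a" "z$2$2 = a" "z$1$2 = b" "z$2$1 = c'" and bc: "b \<noteq> 0 \<or> c' \<noteq> 0"
    using inv_props[OF ch d s n] by metis
  have m: "M$2$2 = M$1$1" "b * M$2$1 = c' * M$1$2" using comm_cond[OF assms(1-5)] zz by auto
  have m': "M'$2$2 = M'$1$1" "b * M'$2$1 = c' * M'$1$2" using comm_cond[OF assms(1-4) c'] zz by auto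
  have k: "M$1$2 * M'$2$1 = M'$1$2 * M$2$1"
  proof (cases "b = 0")
    case True
    then have "c' \<noteq> 0" using bc by simp
    then have "M$1$2 = b * M$2$1 / c'" "M'$1$2 = b * M'$2$1 / c'" using m m' by (auto simp: field_simps)
    then show ?thesis by simp
  next
    case False
    then have "M$2$1 = c' * M$1$2 / b" "M'$2$1 = c' * M'$1$2 / b" using m m' by (auto simp: field_simps)
    then show ?thesis by simp
  qed
  show ?thesis unfolding eq2 using m m' k by (simp add: mm2 algebra_simps)
qed

lemma aux_cancel: "(X::complex) \<noteq> 0 \<Longrightarrow> X * (m / (al * X)) = m / al"
  by (metis mult.commute nonzero_mult_divide_mult_cancel_left times_divide_eq_right)

lemma block_inverse:
  fixes C :: "'g set" and R :: "'g \<Rightarrow> 'g \<Rightarrow> bool" and Kf :: "'g \<Rightarrow> 'g \<Rightarrow> nat"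
  assumes fin: "finite C"
    and rf: "\<And>a. a \<in> C \<Longrightarrow> R a a"
    and sym: "\<And>a b. a \<in> C \<Longrightarrow> b \<in> C \<Longrightarrow> R a b \<Longrightarrow> R b a"
    and trans: "\<And>a b c. a \<in> C \<Longrightarrow> b \<in> C \<Longrightarrow> c \<in> C \<Longrightarrow> R a b \<Longrightarrow> R b c \<Longrightarrow> R a c"
    and proper: "\<And>a. a \<in> C \<Longrightarrow> card {c\<in>C. R a c} < card C"
    and K: "\<And>a b. a \<in> C \<Longrightarrow> b \<in> C \<Longrightarrow> Kf a b = (if a = b then card C else if R a b then card {c\<in>C. R a c} else 0)"
  shows "\<exists>N :: 'g \<Rightarrow> 'g \<Rightarrow> complex. \<forall>a\<in>C. \<forall>c\<in>C.
        (\<Sum>b\<in>C. of_nat (Kf a b) * N b c) = (if a = c then 1 else 0) \<and>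
        (\<Sum>b\<in>C. N a b * of_nat (Kf b c)) = (if a = c then 1 else 0)"
proof -
  define m :: "'g \<Rightarrow> complex" where "m a = of_nat (card {c\<in>C. R a c})" for a
  define al :: "'g \<Rightarrow> complex" where "al a = of_nat (card C) - m a" for a
  define t :: "'g \<Rightarrow> complex" where "t a = m a / (al a * (al a + m a * m a))" for a
  define N where "N b c = (if b = c then 1 / al c else 0) - (if R b c then t c else 0)" for b c
  have Bsame: "{c\<in>C. R a c} = {c\<in>C. R b c}" if "a \<in> C" "b \<in> C" "R a b" for a b
    using that sym trans by blast
  have msame: "m a = m b" "al a = al b" "t a = t b" if "a \<in> C" "b \<in> C" "R a b" for a b
    using Bsame[OF that] by (simp_all add: m_def al_def t_def)
  have alpos: "0 < Re (al a)" "Im (al a) = 0" if "a \<in> C" for a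
    using proper[OF that] by (simp_all add: al_def m_def)
  have mre: "Im (m a) = 0" "0 \<le> Re (m a)" for a by (simp_all add: m_def)
  have al0: "al a \<noteq> 0" if "a \<in> C" for a using alpos[OF that] by auto
  have al1: "al a + m a * m a \<noteq> 0" if "a \<in> C" for a
  proof -
    have "Re (al a + m a * m a) > 0" using alpos[OF that] by (simp add: m_def add_pos_nonneg)
    then show ?thesis by (metis zero_complex.simps(1) order_less_irrefl)
  qed
  have Kc: "(of_nat (Kf a b) :: complex) = (if a = b then al a else 0) + (if R a b then m a else 0)"
    if "a \<in> C" "b \<in> C" for a b
    using K[OF that] rf[OF that(1)] by (auto simp: al_def m_def)
  have left: "(\<Sum>b\<in>C. of_nat (Kf a b) * N b c) = (if a = c then 1 else 0)" if a: "a \<in> C" and c: "c \<in> C" for a c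
  proof (cases "R a c")
    case True
    have pw: "of_nat (Kf a b) * N b c = (if b = a then (if a = c then 1 else 0) else 0) + (if b = a then - al a * t a else 0)
        + (if b = c then m a / al a else 0) + (if R a b then - m a * t a else 0)" if b: "b \<in> C" for b
    proof -
      have "R b c \<longleftrightarrow> R a b" using True sym trans a b c by blast
      then show ?thesis using msame[OF a c True] al0[OF a] True rf[OF a]
        by (auto simp: Kc[OF a b] N_def field_simps)
    qed
    have "(\<Sum>b\<in>C. of_nat (Kf a b) * N b c) = (\<Sum>b\<in>C. (if b = a then (if a = c then 1 else 0) else 0) + (if b = a then - al a * t a else 0)
        + (if b = c then m a / al a else 0) + (if R a b then - m a * t a else 0))"
      using pw by (rule sum.cong[OF refl])
    also have "\<dots> = (if a = c then 1 else 0) - al a * t a + m a / al a - m a * m a * t a"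
      using fin a c by (simp add: sum.distrib sum.If_cases m_def Int_def conj_commute)
    also have "\<dots> = (if a = c then 1 else 0) + (m a / al a - (al a + m a * m a) * t a)"
      by (simp add: algebra_simps)
    also have "\<dots> = (if a = c then 1 else 0)"
    proof -
      have "(al a + m a * m a) * t a = m a / al a"
        using al1[OF a] unfolding t_def by (rule aux_cancel)
      then show ?thesis by (simp only: diff_self add_0_right)
    qed
    finally show ?thesis .
  next
    case False
    have z: "of_nat (Kf a b) * N b c = 0" if b: "b \<in> C" for b
    proof (cases "R a b")
      case True
      then have "\<not> R b c" using False trans[OF a b c] by blast
      moreover have "b \<noteq> c" using True False by blast
      ultimately have "N b c = 0" by (simp add: N_def)
      then show ?thesis by simp
    next
      case nR: False
      then have "a \<noteq> b" using rf[OF a] by blast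
      then have "Kf a b = 0" using K[OF a b] nR by simp
      then show ?thesis by simp
    qed
    have "a \<noteq> c" using False rf[OF a] by blast
    then show ?thesis using z by (simp add: sum.neutral)
  qed
  have Nsym: "N a b = N b a" if "a \<in> C" "b \<in> C" for a b
  proof (cases "R a b")
    case True
    have "R b a" using sym[OF that True] .
    show ?thesis
    proof (cases "a = b")
      case True then show ?thesis by simp
    next
      case ne: False
      have "N a b = - t b" using ne True by (simp add: N_def)
      moreover have "N b a = - t a" using ne \<open>R b a\<close> by (simp add: N_def)
      ultimately show ?thesis using msame(3)[OF that True] by simp
    qed
  next
    case False
    then have "\<not> R b a" "a \<noteq> b" using sym[OF that(2,1)] rf[OF that(1)] by blast+
    then show ?thesis using False by (simp add: N_def)
  qed
  have Ksym: "Kf a b = Kf b a" if "a \<in> C" "b \<in> C" for a b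
  proof (cases "R a b")
    case True
    have "R b a" using sym[OF that True] .
    show ?thesis
    proof (cases "a = b")
      case True then show ?thesis by simp
    next
      case ne: False
      have "Kf a b = card {c\<in>C. R a c}" using ne True K[OF that] by simp
      moreover have "Kf b a = card {c\<in>C. R b c}" using ne \<open>R b a\<close> K[OF that(2,1)] by simp
      ultimately show ?thesis using Bsame[OF that True] by simp
    qed
  next
    case False
    then have "\<not> R b a" "a \<noteq> b" using sym[OF that(2,1)] rf[OF that(1)] by blast+
    then show ?thesis using False K[OF that] K[OF that(2,1)] by simp
  qed
  show ?thesis
  proof (intro exI[of _ N] ballI conjI)
    fix a c assume a: "a \<in> C" and c: "c \<in> C"
    show "(\<Sum>b\<in>C. of_nat (Kf a b) * N b c) = (if a = c then 1 else 0)" by (rule left[OF a c])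
    have "(\<Sum>b\<in>C. N a b * of_nat (Kf b c)) = (\<Sum>b\<in>C. of_nat (Kf c b) * N b a)"
      by (rule sum.cong[OF refl]) (simp add: Nsym[OF a] Ksym[OF _ c] mult.commute)
    also have "\<dots> = (if a = c then 1 else 0)" using left[OF c a] by auto
    finally show "(\<Sum>b\<in>C. N a b * of_nat (Kf b c)) = (if a = c then 1 else 0)" .
  qed
qed

definition g1 :: "'a::field^2^2" where "g1 = (\<chi> i j. if i = 2 \<and> j = 1 then 0 else 1)"
definition g2 :: "'a::field^2^2" where "g2 = (\<chi> i j. if i = 1 \<and> j = 2 then 0 else 1)"

lemma g_props:
  assumes ch: "CHAR('a::field) = 2"
  shows "det (g1::'a^2^2) = 1" "det (g2::'a^2^2) = 1" "(g1::'a^2^2) ** g1 = mat 1" "(g2::'a^2^2) ** g2 = mat 1"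
  using ch2_double[OF ch, of 1] by (simp_all add: g1_def g2_def det_2 eq2 mm2 mat1_2)

lemma noncomm:
  fixes z :: "'a::field^2^2"
  assumes ch: "CHAR('a) = 2" and d: "det z = 1" and s: "z ** z = mat 1" and n: "z \<noteq> mat 1"
  shows "\<not> ((g1**z**g1) ** z = z ** (g1**z**g1) \<and> (g2**z**g2) ** z = z ** (g2**z**g2))"
proof
  assume A: "(g1**z**g1) ** z = z ** (g1**z**g1) \<and> (g2**z**g2) ** z = z ** (g2**z**g2)"
  obtain a b c where zz: "z$1$1 = a" "z$2$2 = a" "z$1$2 = b" "z$2$1 = c" and bc: "b \<noteq> 0 \<or> c \<noteq> 0"
    using inv_props[OF ch d s n] by metis
  have aa: "a + a = 0" by (rule ch2_double[OF ch])
  have c1: "b * (g1**z**g1)$2$1 = c * (g1**z**g1)$1$2" using comm_cond[OF ch d s n, of "g1**z**g1"] A zz by simp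
  have c2: "b * (g2**z**g2)$2$1 = c * (g2**z**g2)$1$2" using comm_cond[OF ch d s n, of "g2**z**g2"] A zz by simp
  have e1: "(g1**z**g1)$2$1 = c" "(g1**z**g1)$1$2 = a + c + b + a" by (simp_all add: mm2 g1_def zz)
  have e2: "(g2**z**g2)$1$2 = b" "(g2**z**g2)$2$1 = a + b + c + a" by (simp_all add: mm2 g2_def zz)
  have "c * (a + c + b + a) = c * c + c * b + c * (a + a)" by (simp add: algebra_simps)
  then have "b * c = c * c + c * b" using c1 e1 aa by simp
  then have "c * c = 0" by (simp add: mult.commute)
  then have c0: "c = 0" by simp
  have "b * (a + b + c + a) = b * b + b * c + b * (a + a)" by (simp add: algebra_simps)
  then have "c * b = b * b + b * c" using c2 e2 aa by simp
  then have "b * b = 0" by (simp add: mult.commute)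
  then have "b = 0" by simp
  then show False using c0 bc by simp
qed

context group begin
lemma conj_sq: "g \<in> carrier G \<Longrightarrow> x \<in> carrier G \<Longrightarrow> x \<otimes> x = \<one> \<Longrightarrow>
  (g \<otimes> x \<otimes> inv g) \<otimes> (g \<otimes> x \<otimes> inv g) = \<one>"
proof -
  assume a: "g \<in> carrier G" "x \<in> carrier G" "x \<otimes> x = \<one>"
  have "(g \<otimes> x \<otimes> inv g) \<otimes> (g \<otimes> x \<otimes> inv g) = g \<otimes> x \<otimes> (inv g \<otimes> g) \<otimes> x \<otimes> inv g"
    using a by (simp only: m_assoc m_closed inv_closed)
  also have "\<dots> = g \<otimes> (x \<otimes> x) \<otimes> inv g" using a by (simp add: m_assoc)
  also have "\<dots> = \<one>" using a by simp
  finally show ?thesis .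
qed

lemma conj_ne: "g \<in> carrier G \<Longrightarrow> x \<in> carrier G \<Longrightarrow> x \<noteq> \<one> \<Longrightarrow> g \<otimes> x \<otimes> inv g \<noteq> \<one>"
proof
  assume a: "g \<in> carrier G" "x \<in> carrier G" "x \<noteq> \<one>" and e: "g \<otimes> x \<otimes> inv g = \<one>"
  have "g \<otimes> x = g \<otimes> x \<otimes> (inv g \<otimes> g)" using a by simp
  also have "\<dots> = (g \<otimes> x \<otimes> inv g) \<otimes> g" using a by (simp add: m_assoc)
  also have "\<dots> = g \<otimes> \<one>" using a e by simp
  finally have "x = \<one>" using a by (simp del: r_one)
  then show False using a by simp
qed
end

lemma SL2_simps: "carrier SL2 = {A. det A = 1}" "A \<otimes>\<^bsub>SL2\<^esub> B = A ** B" "\<one>\<^bsub>SL2\<^esub> = mat 1"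
  by (simp_all add: SL2_def)

lemma sq_comm:
  fixes a b :: "'a::field^2^2"
  assumes "a ** a = mat 1" "b ** b = mat 1" "(a ** b) ** (a ** b) = mat 1"
  shows "a ** b = b ** a"
proof -
  have "b ** a = (a ** a) ** (b ** a) ** (b ** b)" using assms by simp
  also have "\<dots> = a ** ((a ** b) ** (a ** b)) ** b" by (simp add: matrix_mul_assoc)
  also have "\<dots> = a ** b" using assms by simp
  finally show ?thesis by simp
qed

theorem proposition3p3:
  fixes x :: "'a::{field, finite} ^ 2 ^ 2"
  assumes "CHAR('a) = 2"
    and "x \<in> carrier SL2" and "x \<noteq> \<one>\<^bsub>SL2\<^esub>" and "x \<otimes>\<^bsub>SL2\<^esub> x = \<one>\<^bsub>SL2\<^esub>"
  defines "C \<equiv> conj_class SL2 x"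
  shows "(\<forall>a\<in>C. \<forall>b\<in>C. killing_adj SL2 C a b \<longleftrightarrow> commuting_adj SL2 a b)
         \<and> \<not> killing_irreducible SL2 C
         \<and> killing_nondegenerate SL2 C"
proof -
  interpret G: group "SL2 :: ('a^2^2) monoid" by (rule SL2_group)
  have ch: "CHAR('a) = 2" by (rule assms(1))
  have xd: "det x = 1" using assms(2) by (simp add: SL2_simps)
  have xx: "x ** x = mat 1" using assms(4) by (simp add: SL2_simps)
  have xn: "x \<noteq> mat 1" using assms(3) by (simp add: SL2_simps)
  have Cmem: "det t = 1 \<and> t ** t = mat 1 \<and> t \<noteq> mat 1" if "t \<in> C" for t
  proof -
    obtain g where g: "g \<in> carrier SL2" "t = g \<otimes>\<^bsub>SL2\<^esub> x \<otimes>\<^bsub>SL2\<^esub> inv\<^bsub>SL2\<^esub> g"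
      using \<open>t \<in> C\<close> unfolding C_def conj_class_def by blast
    have "t \<in> carrier SL2" using g assms(2) by simp
    moreover have "t \<otimes>\<^bsub>SL2\<^esub> t = \<one>\<^bsub>SL2\<^esub>" using G.conj_sq[OF g(1) assms(2) assms(4)] g(2) by simp
    moreover have "t \<noteq> \<one>\<^bsub>SL2\<^esub>" using G.conj_ne[OF g(1) assms(2,3)] g(2) by simp
    ultimately show ?thesis by (simp add: SL2_simps)
  qed
  have conjC: "g \<otimes>\<^bsub>SL2\<^esub> x \<otimes>\<^bsub>SL2\<^esub> inv\<^bsub>SL2\<^esub> g \<in> C" if "g \<in> carrier SL2" for g
    unfolding C_def conj_class_def using that by blast
  have xC: "x \<in> C" using conjC[OF G.one_closed] assms(2) by simp
  have gC: "g ** x ** g \<in> C" if "det g = 1" "g ** g = mat 1" for g :: "'a^2^2"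
  proof -
    have gc: "g \<in> carrier SL2" using that by (simp add: SL2_simps)
    have "inv\<^bsub>SL2\<^esub> g = g" using G.inv_equality[of g g] gc that(2) by (simp add: SL2_simps)
    then show ?thesis using conjC[OF gc] by (simp add: SL2_simps)
  qed
  obtain w where wC: "w \<in> C" and wn: "\<not> (w ** x = x ** w)"
    using noncomm[OF ch xd xx xn] gC[OF g_props(1,3)[OF ch]] gC[OF g_props(2,4)[OF ch]] by blast
  have CS: "t \<in> carrier SL2" if "t \<in> C" for t using Cmem[OF that] by (simp add: SL2_simps)
  have ctrans: "M ** M' = M' ** M" if "z \<in> C" "M ** z = z ** M" "M' ** z = z ** M'" for z M M'
    using comm_trans[OF ch _ _ _ that(2,3)] Cmem[OF that(1)] by blast
  have adj: "killing_adj SL2 C a b \<longleftrightarrow> commuting_adj SL2 a b" if a: "a \<in> C" and b: "b \<in> C" for a b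
  proof
    assume "killing_adj SL2 C a b"
    then obtain c where ne: "a \<noteq> b" and c: "c \<in> C" "c ** (a ** b) = (a ** b) ** c"
      unfolding killing_adj_def centralizer_in_def by (auto simp: SL2_simps)
    have "det (a ** b) = 1" using Cmem[OF a] Cmem[OF b] by (simp add: det_mul)
    then have "(a ** b) ** (a ** b) = mat 1"
      using comm_sq[OF ch _ _ _ _, of c "a ** b"] Cmem[OF c(1)] c(2) by metis
    then have "a ** b = b ** a" using sq_comm Cmem[OF a] Cmem[OF b] by blast
    then show "commuting_adj SL2 a b" using ne by (simp add: commuting_adj_def SL2_simps)
  next
    assume "commuting_adj SL2 a b"
    then have ne: "a \<noteq> b" and ab: "a ** b = b ** a" by (simp_all add: commuting_adj_def SL2_simps)
    have "a ** (a ** b) = (a ** b) ** a" by (simp add: ab matrix_mul_assoc)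
    then have "a \<in> centralizer_in SL2 (a \<otimes>\<^bsub>SL2\<^esub> b) \<inter> C"
      using a CS[OF a] by (simp add: centralizer_in_def SL2_simps)
    then show "killing_adj SL2 C a b" using ne unfolding killing_adj_def by blast
  qed
  have part1: "\<forall>a\<in>C. \<forall>b\<in>C. killing_adj SL2 C a b \<longleftrightarrow> commuting_adj SL2 a b" using adj by blast
  have part2: "\<not> killing_irreducible SL2 C"
  proof
    assume "killing_irreducible SL2 C"
    then have r: "(\<lambda>u v. u \<in> C \<and> v \<in> C \<and> killing_adj SL2 C u v)\<^sup>*\<^sup>* x w"
      using xC wC unfolding killing_irreducible_def graph_connected_def by blast
    have "u ** x = x ** u \<and> u \<in> C" if "(\<lambda>u v. u \<in> C \<and> v \<in> C \<and> killing_adj SL2 C u v)\<^sup>*\<^sup>* x u" for u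
      using that
    proof (induction rule: rtranclp_induct)
      case base
      then show ?case using xC by simp
    next
      case (step u v)
      then have "commuting_adj SL2 u v" using adj by blast
      then have uv: "v ** u = u ** v" by (simp add: commuting_adj_def SL2_simps)
      have "x ** v = v ** x" using ctrans[of u x v] step uv by simp
      then show ?case using step by simp
    qed
    then show False using r wn by blast
  qed
  define R where "R a b \<longleftrightarrow> a ** b = b ** a" for a b :: "'a^2^2"
  have part3: "killing_nondegenerate SL2 C"
    unfolding killing_nondegenerate_def
  proof (rule block_inverse[where R = R])
    show "finite C" by simp
    show "R a a" for a by (simp add: R_def)
    show "R b a" if "R a b" for a b using that by (simp add: R_def)
    show "R a c" if "a \<in> C" "b \<in> C" "c \<in> C" "R a b" "R b c" for a b c
      using ctrans[of b a c] that by (simp add: R_def)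
    show "card {c\<in>C. R a c} < card C" if a: "a \<in> C" for a
    proof (rule psubset_card_mono)
      show "finite C" by simp
      have "\<not> (R a x \<and> R a w)" using ctrans[OF a, of x w] wn by (auto simp: R_def)
      then show "{c\<in>C. R a c} \<subset> C" using xC wC by blast
    qed
    show "killing_form SL2 C a b = (if a = b then card C else if R a b then card {c\<in>C. R a c} else 0)"
      if a: "a \<in> C" and b: "b \<in> C" for a b
    proof (cases "a = b")
      case True
      have "centralizer_in SL2 (a \<otimes>\<^bsub>SL2\<^esub> b) \<inter> C = C"
        using True Cmem[OF a] CS by (auto simp: centralizer_in_def SL2_simps)
      then show ?thesis using True by (simp add: killing_form_def)
    next
      case ne: False
      show ?thesis
      proof (cases "R a b")
        case True
        then have ab: "a ** b = b ** a" by (simp add: R_def)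
        have zd: "det (a ** b) = 1" using Cmem[OF a] Cmem[OF b] by (simp add: det_mul)
        have zz: "(a ** b) ** (a ** b) = mat 1"
        proof -
          have "(a ** b) ** (a ** b) = (a ** a) ** (b ** b)"
            by (metis ab matrix_mul_assoc)
          then show ?thesis using Cmem[OF a] Cmem[OF b] by simp
        qed
        have zn: "a ** b \<noteq> mat 1"
        proof
          assume "a ** b = mat 1"
          then have "(a ** a) ** b = a" by (metis matrix_mul_assoc matrix_mul_rid)
          then show False using Cmem[OF a] ne by simp
        qed
        have az: "a ** (a ** b) = (a ** b) ** a" by (simp add: ab matrix_mul_assoc)
        have "centralizer_in SL2 (a \<otimes>\<^bsub>SL2\<^esub> b) \<inter> C = {c\<in>C. R a c}"
        proof (rule equalityI[OF subsetI subsetI])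
          fix c assume "c \<in> centralizer_in SL2 (a \<otimes>\<^bsub>SL2\<^esub> b) \<inter> C"
          then have c: "c \<in> C" "c ** (a ** b) = (a ** b) ** c"
            by (auto simp: centralizer_in_def SL2_simps)
          have "c ** a = a ** c"
            using comm_trans[OF ch zd zz zn c(2) az] .
          then show "c \<in> {c\<in>C. R a c}" using c by (simp add: R_def)
        next
          fix c assume "c \<in> {c\<in>C. R a c}"
          then have c: "c \<in> C" "a ** c = c ** a" by (auto simp: R_def)
          have cb: "c ** b = b ** c" using ctrans[OF a, of c b] c ab by simp
          have "c ** (a ** b) = (a ** b) ** c"
            by (metis c(2) cb matrix_mul_assoc)
          then show "c \<in> centralizer_in SL2 (a \<otimes>\<^bsub>SL2\<^esub> b) \<inter> C"
            using c CS[OF c(1)] by (simp add: centralizer_in_def SL2_simps)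
        qed
        then show ?thesis using ne True by (simp add: killing_form_def)
      next
        case False
        have "centralizer_in SL2 (a \<otimes>\<^bsub>SL2\<^esub> b) \<inter> C = {}"
        proof (rule ccontr)
          assume "centralizer_in SL2 (a \<otimes>\<^bsub>SL2\<^esub> b) \<inter> C \<noteq> {}"
          then have "killing_adj SL2 C a b" using ne by (simp add: killing_adj_def)
          then have "commuting_adj SL2 a b" using adj[OF a b] by blast
          then show False using False by (simp add: commuting_adj_def SL2_simps R_def)
        qed
        then show ?thesis using ne False by (simp add: killing_form_def)
      qed
    qed
  qed
  show ?thesis using part1 part2 part3 by blast
qed

end
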